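(* Let $\mathrm P$ be a probability measure on $\mathbb{R}^d$ having a Lebesgue density, and let $\varphi$ be as in the context. For every $\mathbf u\in\mathbb S_{d-1}$, every sequence of reals $t_n\to\infty$, and every choice $\mathbf y_n\in\partial\varphi(t_n\mathbf u)$, we have $\lim_{n\to\infty}\mathbf y_n=\mathbf u$.
   Context: $\mathbb{B}_d$ is the open unit ball of $\mathbb{R}^d$ and $\mathbb S_{d-1}$ the unit sphere. $\mathrm U_d$ is the spherical uniform distribution on $\mathbb B_d$ (density $u_d(\mathbf x)=\frac{1}{a_d|\mathbf x|^{d-1}}$ on $\mathbb B_d\setminus\{\mathbf 0\}$, $a_d=2\pi^{d/2}/\Gamma(d/2)$). $\psi$ is the convex lsc function on $\mathbb B_d$, normalized by $\psi(\mathbf 0)=0$, whose a.e. gradient pushes $\mathrm U_d$ forward to $\mathrm P$ (McCann), extended by $+\infty$ outside $\bar{\mathbb B}_d$, and $\varphi(\mathbf x)=\sup_{\mathbf u\in\mathbb B_d}(\langle\mathbf u,\mathbf x\rangle-\psi(\mathbf u))$, $\mathbf x\in\mathbb{R}^d$, a convex function with $\nabla\varphi\sharp\mathrm P=\mathrm U_d$. $\partial\varphi$ is the subdifferential. *)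

theory Defs
  imports "HOL-Probability.Probability"
begin

definition sphere_area :: "nat \<Rightarrow> real" where
  "sphere_area d = 2 * pi powr (real d / 2) / Gamma (real d / 2)"

definition spherical_uniform :: "'a::euclidean_space measure" where
  "spherical_uniform = density lborel
     (\<lambda>x. ennreal (indicator (ball 0 1 - {0}) x /
                    (sphere_area DIM('a) * norm x ^ (DIM('a) - 1))))"

definition subdiff :: "('a::real_inner \<Rightarrow> real) \<Rightarrow> 'a \<Rightarrow> 'a set" where
  "subdiff f x = {y. \<forall>z. f z \<ge> f x + y \<bullet> (z - x)}"

definition conj_ball :: "('a::real_inner \<Rightarrow> real) \<Rightarrow> 'a \<Rightarrow> real" where
  "conj_ball \<psi> x = (SUP u\<in>ball 0 1. u \<bullet> x - \<psi> u)"

definition lsc_on :: "'a::topological_space set \<Rightarrow> ('a \<Rightarrow> real) \<Rightarrow> bool" where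
  "lsc_on S f \<longleftrightarrow> (\<forall>x\<in>S. \<forall>e>0. eventually (\<lambda>z. f z > f x - e) (at x within S))"

end

theory Submission
  imports Defs
begin

lemma psi_lb:
  fixes \<psi> :: "'a::euclidean_space \<Rightarrow> real"
  assumes cv: "convex_on (ball 0 1) \<psi>" and p0: "\<psi> 0 = 0"
  shows "\<exists>L. \<forall>v\<in>ball 0 1. -L \<le> \<psi> v"
proof -
  have "continuous_on (ball 0 1) \<psi>" by (rule convex_on_continuous[OF open_ball cv])
  hence "isCont \<psi> 0" by (simp add: continuous_on_eq_continuous_at)
  then obtain r where r: "r > 0" "\<And>z. dist z 0 < r \<Longrightarrow> dist (\<psi> z) (\<psi> 0) < 1"
    by (metis continuous_at_eps_delta zero_less_one)
  define c where "c = min r 1"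
  have c: "c > 0" "c \<le> r" "c \<le> 1" using r by (auto simp: c_def)
  show ?thesis
  proof (intro exI ballI)
    fix v :: 'a assume v: "v \<in> ball 0 1"
    hence nv: "norm v < 1" by simp
    have "c * norm v < c * 1" by (rule mult_strict_left_mono[OF nv c(1)])
    hence ncv: "norm (c *\<^sub>R v) < c" using c(1) by (simp add: abs_of_pos)
    have "c * norm v < 1" using \<open>c * norm v < c * 1\<close> c(3) by linarith
    hence w: "- c *\<^sub>R v \<in> ball 0 1" using c by (simp add: abs_of_pos)
    have "c * norm v < r" using \<open>c * norm v < c * 1\<close> c(2) by linarith
    hence "\<psi> (- c *\<^sub>R v) < 1" using r(2)[of "- c *\<^sub>R v"] c p0 by (simp add: dist_norm abs_of_pos abs_less_iff)
    define t where "t = 1 / (1 + c)"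
    have t: "0 \<le> t" "t \<le> 1" using c by (auto simp: t_def)
    have t1: "1 - t = t * c" using c by (simp add: t_def divide_simps)
    have eq: "(1 - t) *\<^sub>R v + t *\<^sub>R (- c *\<^sub>R v) = 0"
      unfolding t1 by simp
    have "\<psi> ((1 - t) *\<^sub>R v + t *\<^sub>R (- c *\<^sub>R v)) \<le> (1 - t) * \<psi> v + t * \<psi> (- c *\<^sub>R v)"
      by (rule convex_onD[OF cv t v w])
    hence "0 \<le> (1 - t) * \<psi> v + t * \<psi> (- c *\<^sub>R v)" unfolding eq p0 .
    hence "0 \<le> t * (c * \<psi> v + \<psi> (- c *\<^sub>R v))" unfolding t1 by (simp add: algebra_simps)
    moreover have "t > 0" using c by (simp add: t_def)
    ultimately have "0 \<le> c * \<psi> v + \<psi> (- c *\<^sub>R v)"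
      by (simp add: zero_le_mult_iff)
    hence "0 < c * \<psi> v + 1" using \<open>\<psi> (- c *\<^sub>R v) < 1\<close> by linarith
    hence "- 1 < c * \<psi> v" by linarith
    thus "- (1/c) \<le> \<psi> v" using c by (simp add: field_simps)
  qed
qed

theorem proposition3p1:
  fixes P :: "'a::euclidean_space measure"
    and \<psi> :: "'a \<Rightarrow> real"
    and G :: "'a \<Rightarrow> 'a"
  assumes P_prob: "prob_space P"
    and P_dens: "\<exists>f\<in>borel_measurable lborel. P = density lborel f"
    and psi_convex: "convex_on (ball 0 1) \<psi>"
    and psi_lsc: "lsc_on (ball 0 1) \<psi>"
    and psi_0: "\<psi> 0 = 0"
    and G_grad: "AE x in spherical_uniform. (\<psi> has_derivative (\<lambda>h. G x \<bullet> h)) (at x)"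
    and G_meas: "G \<in> borel_measurable spherical_uniform"
    and push: "distr spherical_uniform borel G = P"
    and u: "u \<in> sphere 0 1"
    and t: "filterlim t at_top sequentially"
    and y: "\<And>n. y n \<in> subdiff (conj_ball \<psi>) (t n *\<^sub>R u)"
  shows "y \<longlonglongrightarrow> u"
proof -
  obtain L where L: "\<And>v. v \<in> ball 0 1 \<Longrightarrow> -L \<le> \<psi> v" using psi_lb[OF psi_convex psi_0] by blast
  define \<phi> where "\<phi> = conj_ball \<psi>"
  have bd0: "v \<bullet> x - \<psi> v \<le> norm x + L" if v: "v \<in> ball 0 1" for x v
  proof -
    have "v \<bullet> x \<le> norm v * norm x" by (rule norm_cauchy_schwarz)
    also have "\<dots> \<le> norm x" using v by (simp add: mult_left_le_one_le)
    finally show "v \<bullet> x - \<psi> v \<le> norm x + L" using L[OF v] by linarith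
  qed
  have bdd: "bdd_above ((\<lambda>v. v \<bullet> x - \<psi> v) ` ball 0 1)" for x
    by (rule bdd_aboveI2[of _ _ "norm x + L"]) (use bd0 in blast)
  have upper: "v \<bullet> x - \<psi> v \<le> \<phi> x" if "v \<in> ball 0 1" for v x
    unfolding \<phi>_def conj_ball_def by (rule cSUP_upper[OF that bdd])
  have least: "\<phi> x \<le> B" if "\<And>v. v \<in> ball 0 1 \<Longrightarrow> v \<bullet> x - \<psi> v \<le> B" for x B
    unfolding \<phi>_def conj_ball_def by (rule cSUP_least) (auto intro: that)
  have lip: "\<phi> z \<le> \<phi> x + norm (z - x)" for z x
  proof (rule least)
    fix v :: 'a assume v: "v \<in> ball 0 1"
    have "v \<bullet> (z - x) \<le> norm v * norm (z - x)" by (rule norm_cauchy_schwarz)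
    also have "\<dots> \<le> norm (z - x)" using v by (simp add: mult_left_le_one_le)
    finally have "v \<bullet> z - \<psi> v \<le> (v \<bullet> x - \<psi> v) + norm (z - x)" by (simp add: inner_diff_right)
    thus "v \<bullet> z - \<psi> v \<le> \<phi> x + norm (z - x)" using upper[OF v, of x] by linarith
  qed
  have phi0: "\<phi> 0 \<le> L"
  proof (rule least)
    fix v :: 'a assume "v \<in> ball 0 1"
    from L[OF this] show "v \<bullet> 0 - \<psi> v \<le> L" by simp
  qed
  have sg: "\<phi> z \<ge> \<phi> (t n *\<^sub>R u) + y n \<bullet> (z - t n *\<^sub>R u)" for n z
    using y[of n] unfolding subdiff_def \<phi>_def by blast
  have ny: "norm (y n) \<le> 1" for n
  proof -
    have "\<phi> (t n *\<^sub>R u) + y n \<bullet> y n \<le> \<phi> (t n *\<^sub>R u) + norm (y n)"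
      using sg[of n "t n *\<^sub>R u + y n"] lip[of "t n *\<^sub>R u + y n" "t n *\<^sub>R u"] by simp
    hence "norm (y n) ^ 2 \<le> norm (y n)" by (simp add: power2_norm_eq_inner)
    hence h: "norm (y n) * norm (y n) \<le> norm (y n) * 1" by (simp add: power2_eq_square)
    show ?thesis
    proof (rule ccontr)
      assume "\<not> norm (y n) \<le> 1"
      hence "norm (y n) * 1 < norm (y n) * norm (y n)"
        by (intro mult_strict_left_mono) auto
      with h show False by linarith
    qed
  qed
  have nu: "norm u = 1" using u by simp
  show ?thesis
  proof (rule tendstoI)
    fix e :: real assume e: "e > 0"
    define \<epsilon> where "\<epsilon> = min (1/2) (e^2/4)"
    have eps: "0 < \<epsilon>" "\<epsilon> \<le> 1/2" "\<epsilon> \<le> e^2/4" using e by (auto simp: \<epsilon>_def)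
    define v where "v = (1 - \<epsilon>) *\<^sub>R u"
    have vb: "v \<in> ball 0 1" using eps nu by (simp add: v_def)
    define C where "C = \<psi> v + L"
    define T where "T = 4 * (\<bar>C\<bar> + 1) / e^2"
    have T: "T > 0" using e by (simp add: T_def)
    have ev: "eventually (\<lambda>n. T \<le> t n) sequentially"
      using t by (simp add: filterlim_at_top)
    show "eventually (\<lambda>n. dist (y n) u < e) sequentially"
      using ev
    proof eventually_elim
      case (elim n)
      have tp: "t n > 0" using elim T by linarith
      have "\<phi> 0 \<ge> \<phi> (t n *\<^sub>R u) + y n \<bullet> (0 - t n *\<^sub>R u)" by (rule sg)
      hence a: "t n * (y n \<bullet> u) \<ge> \<phi> (t n *\<^sub>R u) - \<phi> 0" by simp
      have "v \<bullet> (t n *\<^sub>R u) - \<psi> v \<le> \<phi> (t n *\<^sub>R u)" by (rule upper[OF vb])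
      moreover have vu: "v \<bullet> u = 1 - \<epsilon>"
        using nu by (simp add: v_def power2_norm_eq_inner[symmetric])
      moreover have "v \<bullet> (t n *\<^sub>R u) = t n * (1 - \<epsilon>)"
        using vu by simp
      ultimately have "t n * (y n \<bullet> u) \<ge> t n * (1 - \<epsilon>) - C"
        using a phi0 by (simp add: C_def)
      hence b: "y n \<bullet> u \<ge> (1 - \<epsilon>) - C / t n" using tp by (simp add: field_simps)
      have "C / t n \<le> \<bar>C\<bar> / t n" using tp by (intro divide_right_mono) auto
      also have "\<dots> \<le> \<bar>C\<bar> / T" using tp elim T by (intro divide_left_mono) auto
      also have "\<bar>C\<bar> / T < e^2/4" using e by (simp add: T_def field_simps)
      finally have c: "C / t n < e^2/4" .
      have "norm (y n - u)^2 = norm (y n)^2 - 2 * (y n \<bullet> u) + norm u ^ 2"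
        by (simp add: power2_norm_eq_inner inner_diff_left inner_diff_right inner_commute)
      also have "\<dots> \<le> 2 - 2 * (y n \<bullet> u)"
      proof -
        have "norm (y n)^2 \<le> 1" using ny[of n] by (intro power_le_one) auto
        thus ?thesis using nu by simp
      qed
      also have "\<dots> < e^2" using b c eps by linarith
      finally have "norm (y n - u)^2 < e^2" .
      thus ?case using e by (simp add: dist_norm power_less_imp_less_base)
    qed
  qed
qed

end
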